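(* Let $G_s$ be a selection-augmented causal DAG with treatment $X$, outcome $Y$ and selection node $S$. If $P(Y^*_{X^*})$ is naturally experimental s-recoverable in $G_s$, then $G_s$ contains no direct path (edge $Y\to S$) and no indirect path (directed path from $Y$ to $S$ through intermediate nodes) between $Y$ and $S$.
   Context: Selection-augmented graph: $G_s$ is a causal DAG over observed variables $V$ (including $X$ and $Y$) with an additional binary selection node $S$ ($S=1$ means included in the sample), with edges into $S$ from the variables influencing inclusion; each endogenous node has its own exogenous variable. Twin network: add a counterfactual copy of every endogenous node (including $S^*$), each copy sharing the exogenous parent of its original and with the same edges among copies, and remove edges into the counterfactual treatment $X^*$; $Y^*_{X^*}$ is the counterfactual outcome, with $P(Y^*_{X^*=x}=y)=P(Y=y\mid do(X=x))$. Natural experimental s-recoverability: for every experimental distribution compatible with $G_s$, $P(Y^*_{X^*}\mid S=1)=P(Y^*_{X^*})>0$. *)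

theory Defs
  imports "HOL-Probability.Probability"
begin

definition selection_dag ::
  "'v set \<Rightarrow> ('v \<times> 'v) set \<Rightarrow> 'v \<Rightarrow> 'v \<Rightarrow> 'v \<Rightarrow> bool" where
  "selection_dag N E X Y S \<longleftrightarrow>
     finite N \<and> E \<subseteq> N \<times> N \<and> acyclic E \<and>
     X \<in> N \<and> Y \<in> N \<and> S \<in> N \<and> X \<noteq> Y \<and> X \<noteq> S \<and> Y \<noteq> S \<and>
     (\<forall>v. (S, v) \<notin> E)"

text \<open>A mechanism for node v only reads the values of the parents of v
(and its own exogenous variable).\<close>
definition local_mech :: "('v \<times> 'v) set \<Rightarrow> 'v \<Rightarrow> (('v \<Rightarrow> nat) \<Rightarrow> nat \<Rightarrow> nat) \<Rightarrow> bool" where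
  "local_mech E v fv \<longleftrightarrow>
     (\<forall>w w' e. (\<forall>p. (p, v) \<in> E \<longrightarrow> w p = w' p) \<longrightarrow> fv w e = fv w' e)"

definition compatible_model ::
  "'v set \<Rightarrow> ('v \<times> 'v) set \<Rightarrow> 'v \<Rightarrow> ('v \<Rightarrow> ('v \<Rightarrow> nat) \<Rightarrow> nat \<Rightarrow> nat) \<Rightarrow> bool" where
  "compatible_model N E S f \<longleftrightarrow>
     (\<forall>v\<in>N. local_mech E v (f v)) \<and> (\<forall>w e. f S w e \<in> {0, 1})"

text \<open>Values of all endogenous variables given the exogenous assignment u
(the unique solution of the structural equations in an acyclic model).\<close>
definition solve ::
  "'v set \<Rightarrow> ('v \<Rightarrow> ('v \<Rightarrow> nat) \<Rightarrow> nat \<Rightarrow> nat) \<Rightarrow> ('v \<Rightarrow> nat) \<Rightarrow> ('v \<Rightarrow> nat)" where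
  "solve N f u = (THE w. (\<forall>v\<in>N. w v = f v w (u v)) \<and> (\<forall>v. v \<notin> N \<longrightarrow> w v = 0))"

definition do_mech ::
  "('v \<Rightarrow> ('v \<Rightarrow> nat) \<Rightarrow> nat \<Rightarrow> nat) \<Rightarrow> 'v \<Rightarrow> nat \<Rightarrow> ('v \<Rightarrow> ('v \<Rightarrow> nat) \<Rightarrow> nat \<Rightarrow> nat)" where
  "do_mech f X x = f(X := (\<lambda>_ _. x))"

definition exo :: "'v set \<Rightarrow> ('v \<Rightarrow> nat pmf) \<Rightarrow> ('v \<Rightarrow> nat) pmf" where
  "exo N q = Pi_pmf N 0 q"

definition sel_prob :: "'v set \<Rightarrow> ('v \<Rightarrow> nat pmf) \<Rightarrow> ('v \<Rightarrow> ('v \<Rightarrow> nat) \<Rightarrow> nat \<Rightarrow> nat) \<Rightarrow> 'v \<Rightarrow> real" where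
  "sel_prob N q f S = measure_pmf.prob (exo N q) {u. solve N f u S = 1}"

text \<open>Twin network: P(Y*_{X*=x} = y) -- counterfactual copy with shared exogenous
variables and X* set to x.\<close>
definition cf_prob ::
  "'v set \<Rightarrow> ('v \<Rightarrow> nat pmf) \<Rightarrow> ('v \<Rightarrow> ('v \<Rightarrow> nat) \<Rightarrow> nat \<Rightarrow> nat) \<Rightarrow> 'v \<Rightarrow> nat \<Rightarrow> 'v \<Rightarrow> nat \<Rightarrow> real" where
  "cf_prob N q f X x Y y = measure_pmf.prob (exo N q) {u. solve N (do_mech f X x) u Y = y}"

definition cf_sel_prob ::
  "'v set \<Rightarrow> ('v \<Rightarrow> nat pmf) \<Rightarrow> ('v \<Rightarrow> ('v \<Rightarrow> nat) \<Rightarrow> nat \<Rightarrow> nat) \<Rightarrow> 'v \<Rightarrow> nat \<Rightarrow> 'v \<Rightarrow> nat \<Rightarrow> 'v \<Rightarrow> real" where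
  "cf_sel_prob N q f X x Y y S = measure_pmf.prob (exo N q)
     {u. solve N (do_mech f X x) u Y = y \<and> solve N f u S = 1}"

text \<open>Natural experimental s-recoverability: for every model compatible with G_s
(with P(S=1) > 0 so conditioning is defined), P(Y*_{X*} | S=1) = P(Y*_{X*}).\<close>
definition nat_exp_s_recoverable ::
  "'v set \<Rightarrow> ('v \<times> 'v) set \<Rightarrow> 'v \<Rightarrow> 'v \<Rightarrow> 'v \<Rightarrow> bool" where
  "nat_exp_s_recoverable N E X Y S \<longleftrightarrow>
     (\<forall>q f. compatible_model N E S f \<and> sel_prob N q f S > 0 \<longrightarrow>
        (\<forall>x y. cf_sel_prob N q f X x Y y S / sel_prob N q f S = cf_prob N q f X x Y y))"

end

theory Submission
  imports Defs
begin

lemma sol_unique: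
  assumes fin: "finite N" and sub: "E \<subseteq> N \<times> N" and acy: "acyclic E"
    and loc: "\<forall>v\<in>N. local_mech E v (f v)"
    and w1: "(\<forall>v\<in>N. w1 v = f v w1 (u v)) \<and> (\<forall>v. v \<notin> N \<longrightarrow> w1 v = 0)"
    and w2: "(\<forall>v\<in>N. w2 v = f v w2 (u v)) \<and> (\<forall>v. v \<notin> N \<longrightarrow> w2 v = 0)"
  shows "w1 = w2"
proof
  fix a
  have "finite (N \<times> N)" using fin by simp
  then have "finite E" by (rule finite_subset[OF sub])
  then have wf: "wf E" using acy by (rule finite_acyclic_wf)
  show "w1 a = w2 a"
  proof (induction a rule: wf_induct_rule[OF wf])
    case (1 v)
    show ?case
    proof (cases "v \<in> N")
      case True
      from loc True have lm: "local_mech E v (f v)" by blast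
      have par: "\<forall>p. (p, v) \<in> E \<longrightarrow> w1 p = w2 p" using 1 by blast
      have "f v w1 (u v) = f v w2 (u v)"
        using lm par unfolding local_mech_def by blast
      then show ?thesis using w1 w2 True by simp
    next
      case False then show ?thesis using w1 w2 by simp
    qed
  qed
qed

definition gm :: "('v \<times> 'v) set \<Rightarrow> 'v \<Rightarrow> 'v set \<Rightarrow> 'v \<Rightarrow> ('v \<Rightarrow> nat) \<Rightarrow> nat \<Rightarrow> nat" where
  "gm E Y K v w e = (if v \<in> K then 0 else if v = Y then (if e = 1 then 1 else 0)
      else if (\<exists>p. (p, v) \<in> E \<and> w p = 1) then 1 else 0)"

definition Wm :: "'v set \<Rightarrow> ('v \<times> 'v) set \<Rightarrow> 'v \<Rightarrow> 'v set \<Rightarrow> ('v \<Rightarrow> nat) \<Rightarrow> 'v \<Rightarrow> nat" where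
  "Wm N E Y K u v = (if v \<in> N \<and> v \<notin> K \<and> u Y = 1 \<and> (Y, v) \<in> {(a, b). (a, b) \<in> E \<and> a \<notin> K}\<^sup>* then 1 else 0)"

lemma gm_local: "local_mech E v (gm E Y K v)"
  unfolding local_mech_def
proof (intro allI impI)
  fix w w' :: "'a \<Rightarrow> nat" and e
  assume h: "\<forall>p. (p, v) \<in> E \<longrightarrow> w p = w' p"
  have "(\<exists>p. (p, v) \<in> E \<and> w p = 1) = (\<exists>p. (p, v) \<in> E \<and> w' p = 1)"
  proof
    assume "\<exists>p. (p, v) \<in> E \<and> w p = 1"
    then obtain p where "(p, v) \<in> E" "w p = 1" by blast
    then show "\<exists>p. (p, v) \<in> E \<and> w' p = 1" using h by force
  next
    assume "\<exists>p. (p, v) \<in> E \<and> w' p = 1"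
    then obtain p where "(p, v) \<in> E" "w' p = 1" by blast
    then show "\<exists>p. (p, v) \<in> E \<and> w p = 1" using h by force
  qed
  then show "gm E Y K v w e = gm E Y K v w' e" unfolding gm_def by simp
qed

lemma Wm_sol:
  assumes sub: "E \<subseteq> N \<times> N" and YN: "Y \<in> N" and YK: "Y \<notin> K"
  shows "(\<forall>v\<in>N. Wm N E Y K u v = gm E Y K v (Wm N E Y K u) (u v)) \<and> (\<forall>v. v \<notin> N \<longrightarrow> Wm N E Y K u v = 0)"
proof (intro conjI ballI allI impI)
  fix v assume vN: "v \<in> N"
  let ?EK = "{(a, b). (a, b) \<in> E \<and> a \<notin> K}"
  show "Wm N E Y K u v = gm E Y K v (Wm N E Y K u) (u v)"
  proof (cases "v \<in> K")
    case True then show ?thesis by (simp add: Wm_def gm_def)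
  next
    case vK: False
    show ?thesis
    proof (cases "v = Y")
      case True then show ?thesis using YN YK by (simp add: Wm_def gm_def)
    next
      case vY: False
      have "(u Y = 1 \<and> (Y, v) \<in> ?EK\<^sup>*) \<longleftrightarrow> (\<exists>p. (p, v) \<in> E \<and> Wm N E Y K u p = 1)"
      proof
        assume h: "u Y = 1 \<and> (Y, v) \<in> ?EK\<^sup>*"
        then have hr: "(Y, v) \<in> ?EK\<^sup>*" by blast
        obtain p where p1: "(Y, p) \<in> ?EK\<^sup>*" and p2: "(p, v) \<in> ?EK"
        proof (rule rtranclE[OF hr])
          assume "Y = v" then show ?thesis using vY by simp
        next
          fix y assume "(Y, y) \<in> ?EK\<^sup>*" "(y, v) \<in> ?EK"
          then show ?thesis using that by blast
        qed
        have pE: "(p, v) \<in> E" and pK: "p \<notin> K" using p2 by auto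
        have "p \<in> N" using pE sub by blast
        then have "Wm N E Y K u p = 1" using pK h p1 by (simp add: Wm_def)
        then show "\<exists>p. (p, v) \<in> E \<and> Wm N E Y K u p = 1"
          using pE by blast
      next
        assume "\<exists>p. (p, v) \<in> E \<and> Wm N E Y K u p = 1"
        then obtain p where p: "(p, v) \<in> E" "Wm N E Y K u p = 1" by blast
        have c: "p \<in> N \<and> p \<notin> K \<and> u Y = 1 \<and> (Y, p) \<in> ?EK\<^sup>*"
        proof (rule ccontr)
          assume "\<not> (p \<in> N \<and> p \<notin> K \<and> u Y = 1 \<and> (Y, p) \<in> ?EK\<^sup>*)"
          then have "Wm N E Y K u p = 0" unfolding Wm_def by (rule if_not_P)
          then show False using p(2) by simp
        qed
        then have "(p, v) \<in> ?EK" using p(1) by simp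
        moreover have c4: "(Y, p) \<in> ?EK\<^sup>*" using c by blast
        ultimately have "(Y, v) \<in> ?EK\<^sup>*" by (rule rtrancl_into_rtrancl[rotated])
        then show "u Y = 1 \<and> (Y, v) \<in> ?EK\<^sup>*"
          using c by blast
      qed
      note iff = this
      have g: "gm E Y K v (Wm N E Y K u) (u v) = (if \<exists>p. (p, v) \<in> E \<and> Wm N E Y K u p = 1 then 1 else 0)"
        using vK vY unfolding gm_def by simp
      have w: "Wm N E Y K u v = (if u Y = 1 \<and> (Y, v) \<in> ?EK\<^sup>* then 1 else 0)"
        using vN vK unfolding Wm_def by simp
      show ?thesis unfolding g w iff ..
    qed
  qed
next
  fix v assume "v \<notin> N" then show "Wm N E Y K u v = 0" by (simp add: Wm_def)
qed

lemma solve_gm: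
  assumes "finite N" "E \<subseteq> N \<times> N" "acyclic E" "Y \<in> N" "Y \<notin> K"
  shows "solve N (gm E Y K) u = Wm N E Y K u"
  unfolding solve_def
proof (rule the_equality)
  show "(\<forall>v\<in>N. Wm N E Y K u v = gm E Y K v (Wm N E Y K u) (u v)) \<and> (\<forall>v. v \<notin> N \<longrightarrow> Wm N E Y K u v = 0)"
    by (rule Wm_sol[OF assms(2,4,5)])
next
  fix w assume "(\<forall>v\<in>N. w v = gm E Y K v w (u v)) \<and> (\<forall>v. v \<notin> N \<longrightarrow> w v = 0)"
  note prem = this
  have loc: "\<forall>v\<in>N. local_mech E v (gm E Y K v)" by (simp add: gm_local)
  show "w = Wm N E Y K u"
    by (rule sol_unique[OF assms(1-3) loc prem Wm_sol[OF assms(2,4,5)]])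
qed

lemma main:
  assumes dag: "selection_dag N E X Y S"
    and rec: "nat_exp_s_recoverable N E X Y S"
  shows "(Y, S) \<notin> E\<^sup>+"
proof
  assume YS: "(Y, S) \<in> E\<^sup>+"
  have fin: "finite N" and sub: "E \<subseteq> N \<times> N" and acy: "acyclic E" and XN: "X \<in> N"
    and YN: "Y \<in> N" and SN: "S \<in> N" and XY: "X \<noteq> Y"
    using dag unfolding selection_dag_def by auto
  define q :: "'a \<Rightarrow> nat pmf" where "q = (\<lambda>v. if v = Y then pmf_of_set {0, 1} else return_pmf 0)"
  define f where "f = gm E Y {}"
  have dm: "do_mech f X 0 = gm E Y {X}"
    unfolding do_mech_def f_def gm_def by (auto intro!: ext)
  have S1: "solve N f u S = (if u Y = 1 then 1 else 0)" for u
  proof -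
    have "(Y, S) \<in> {(a, b). (a, b) \<in> E \<and> a \<notin> {}}\<^sup>*" using YS
      by (simp add: trancl_into_rtrancl)
    then show ?thesis unfolding f_def using solve_gm[OF fin sub acy YN, of "{}"] SN
      by (simp add: Wm_def)
  qed
  have Y1: "solve N (do_mech f X 0) u Y = (if u Y = 1 then 1 else 0)" for u
    unfolding dm using solve_gm[OF fin sub acy YN, of "{X}"] XY YN by (simp add: Wm_def)
  have PY: "measure_pmf.prob (exo N q) {u. u Y = 1} = 1/2"
  proof -
    have "measure_pmf.prob (exo N q) {u. u Y = 1} = measure_pmf.prob (map_pmf (\<lambda>u. u Y) (exo N q)) {1}"
      by (simp add: vimage_def)
    also have "map_pmf (\<lambda>u. u Y) (exo N q) = pmf_of_set {0, 1}"
      unfolding exo_def using Pi_pmf_component[OF fin, of Y 0 q] YN by (simp add: q_def)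
    also have "measure_pmf.prob (pmf_of_set {0::nat, 1}) {1} = 1/2"
      by (simp add: measure_pmf_of_set)
    finally show ?thesis .
  qed
  have comp: "compatible_model N E S f"
    unfolding compatible_model_def f_def using gm_local by (auto simp: gm_def)
  have e1: "{u. solve N f u S = 1} = {u. u Y = 1}" by (simp add: S1)
  have e2: "{u. solve N (do_mech f X 0) u Y = 1 \<and> solve N f u S = 1} = {u. u Y = 1}"
    by (simp add: S1 Y1)
  have e3: "{u. solve N (do_mech f X 0) u Y = 1} = {u. u Y = 1}" by (simp add: Y1)
  have sp: "sel_prob N q f S = 1/2"
    unfolding sel_prob_def e1 by (rule PY)
  have cs: "cf_sel_prob N q f X 0 Y 1 S = 1/2"
    unfolding cf_sel_prob_def e2 by (rule PY)
  have cp: "cf_prob N q f X 0 Y 1 = 1/2"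
    unfolding cf_prob_def e3 by (rule PY)
  have pos: "sel_prob N q f S > 0" unfolding sp by simp
  have "\<forall>x y. cf_sel_prob N q f X x Y y S / sel_prob N q f S = cf_prob N q f X x Y y"
    using rec comp pos unfolding nat_exp_s_recoverable_def by blast
  then have "cf_sel_prob N q f X 0 Y 1 S / sel_prob N q f S = cf_prob N q f X 0 Y 1"
    by blast
  then have "(1/2::real) / (1/2) = 1/2" unfolding sp cs cp .
  then show False by simp
qed

theorem lemma3:
  assumes "selection_dag N E X Y S"
    and "nat_exp_s_recoverable N E X Y S"
  shows "(Y, S) \<notin> E \<and> \<not> (\<exists>Z. (Y, Z) \<in> E\<^sup>+ \<and> (Z, S) \<in> E\<^sup>+)"
proof -
  have m: "(Y, S) \<notin> E\<^sup>+" by (rule main[OF assms])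
  have a: "(Y, S) \<notin> E" using m r_into_trancl by metis
  have b: "\<not> (\<exists>Z. (Y, Z) \<in> E\<^sup>+ \<and> (Z, S) \<in> E\<^sup>+)"
  proof
    assume "\<exists>Z. (Y, Z) \<in> E\<^sup>+ \<and> (Z, S) \<in> E\<^sup>+"
    then obtain Z where "(Y, Z) \<in> E\<^sup>+" "(Z, S) \<in> E\<^sup>+" by blast
    then have "(Y, S) \<in> E\<^sup>+" by (rule trancl_trans)
    then show False using m by simp
  qed
  show ?thesis using a b by simp
qed

end
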